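(* Let $\mathcal{S}$ be finite, $\Pi$ irreducible stochastic on $\mathcal{S}$, $\kappa(x,y):=\pi_{xy}-\mathbf{1}_{x=y}$, $Q=(q(y))$ the invariant distribution, and assume detailed balance $q(y)\kappa(y,z)=q(z)\kappa(z,y)$ for all $y,z$. Let $\Phi:(0,\infty)\to\mathbb{R}$ be convex, continuously differentiable with continuous strictly positive second derivative, $\Phi(1)=0$, $\varphi:=\Phi'$. Fix $\ell:\mathcal{S}\to(0,\infty)$ with $\sum_xq(x)\ell(x)=1$. Then for every $f:\mathcal{S}\to\mathbb{R}$, $$\|f\|_{\mathbb{H}^{-1}_\Theta(\mathcal{S},\ell Q)}=\inf_{G:\mathcal{Z}\to\mathbb{R}}\Big\{\|G\|_{\mathbb{L}^2(\mathcal{Z},\vartheta_\ell C)}\;:\;f+\nabla\cdot(\vartheta_\ell G)=0\Big\}.$$ Moreover $\|f\|_{\mathbb{H}^{-1}_\Theta(\mathcal{S},\ell Q)}<\infty$ if and only if $\sum_xq(x)f(x)=0$; in that case the infimum is attained, and uniquely, by the unique discrete gradient $G=\nabla h$ ($h:\mathcal{S}\to\mathbb{R}$) satisfying the constraint.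
   Context: $\mathcal{Z}:=\{(x,y):\kappa(x,y)>0\}$, $c(x,y):=\frac12\kappa(x,y)q(x)$. Discrete gradient $\nabla f(x,y):=f(y)-f(x)$; discrete divergence of $F$: $(\nabla\cdot F)(x):=\frac12\sum_{y\neq x}\kappa(x,y)[F(x,y)-F(y,x)]$. $\Theta^\Phi(a,b):=\frac{a-b}{\varphi(a)-\varphi(b)}$ for $a\neq b$, $\Theta^\Phi(b,b):=1/\Phi''(b)$; $\vartheta_\ell(x,y):=\Theta^\Phi(\ell(x),\ell(y))$. Weighted norm $\|F\|^2_{\mathbb{L}^2(\mathcal{Z},\vartheta_\ell C)}:=\sum_{(x,y)\in\mathcal{Z}}c(x,y)\vartheta_\ell(x,y)F(x,y)^2$ (with inner product defined analogously). $\|f\|_{\mathbb{H}^1_\Theta(\mathcal{S},\ell Q)}:=\|\nabla f\|_{\mathbb{L}^2(\mathcal{Z},\vartheta_\ell C)}$, and $\|f\|_{\mathbb{H}^{-1}_\Theta(\mathcal{S},\ell Q)}:=\sup_{g:\mathcal{S}\to\mathbb{R}}\frac{\sum_xq(x)f(x)g(x)}{\|g\|_{\mathbb{H}^1_\Theta(\mathcal{S},\ell Q)}}$. *)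

theory Defs
  imports "HOL-Analysis.Analysis"
begin

fun trans_pow :: "('a::finite \<Rightarrow> 'a \<Rightarrow> real) \<Rightarrow> nat \<Rightarrow> 'a \<Rightarrow> 'a \<Rightarrow> real" where
  "trans_pow P 0 = (\<lambda>x y. if x = y then 1 else 0)"
| "trans_pow P (Suc n) = (\<lambda>x y. \<Sum>z\<in>UNIV. trans_pow P n x z * P z y)"

definition stochastic :: "('a::finite \<Rightarrow> 'a \<Rightarrow> real) \<Rightarrow> bool" where
  "stochastic P \<longleftrightarrow> (\<forall>x y. P x y \<ge> 0) \<and> (\<forall>x. (\<Sum>y\<in>UNIV. P x y) = 1)"

definition irreducible_chain :: "('a::finite \<Rightarrow> 'a \<Rightarrow> real) \<Rightarrow> bool" where
  "irreducible_chain P \<longleftrightarrow> (\<forall>x y. \<exists>n. trans_pow P n x y > 0)"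

definition invariant_distribution :: "('a::finite \<Rightarrow> 'a \<Rightarrow> real) \<Rightarrow> ('a \<Rightarrow> real) \<Rightarrow> bool" where
  "invariant_distribution P q \<longleftrightarrow> (\<forall>x. q x \<ge> 0) \<and> (\<Sum>x\<in>UNIV. q x) = 1
     \<and> (\<forall>y. (\<Sum>x\<in>UNIV. q x * P x y) = q y)"

definition kappa :: "('a \<Rightarrow> 'a \<Rightarrow> real) \<Rightarrow> 'a \<Rightarrow> 'a \<Rightarrow> real" where
  "kappa P x y = P x y - (if x = y then 1 else 0)"

definition Zset :: "('a \<Rightarrow> 'a \<Rightarrow> real) \<Rightarrow> ('a \<times> 'a) set" where
  "Zset P = {(x, y). kappa P x y > 0}"

definition cw :: "('a \<Rightarrow> 'a \<Rightarrow> real) \<Rightarrow> ('a \<Rightarrow> real) \<Rightarrow> 'a \<Rightarrow> 'a \<Rightarrow> real" where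
  "cw P q x y = 1/2 * kappa P x y * q x"

definition dgrad :: "('a \<Rightarrow> real) \<Rightarrow> 'a \<Rightarrow> 'a \<Rightarrow> real" where
  "dgrad f x y = f y - f x"

definition ddiv :: "('a::finite \<Rightarrow> 'a \<Rightarrow> real) \<Rightarrow> ('a \<Rightarrow> 'a \<Rightarrow> real) \<Rightarrow> 'a \<Rightarrow> real" where
  "ddiv P F x = 1/2 * (\<Sum>y\<in>UNIV - {x}. kappa P x y * (F x y - F y x))"

text \<open>Theta^Phi, with phi = Phi' and Phi2 = Phi''.\<close>
definition Theta :: "(real \<Rightarrow> real) \<Rightarrow> (real \<Rightarrow> real) \<Rightarrow> real \<Rightarrow> real \<Rightarrow> real" where
  "Theta \<phi> \<Phi>2 a b = (if a \<noteq> b then (a - b) / (\<phi> a - \<phi> b) else 1 / \<Phi>2 b)"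

definition vartheta :: "(real \<Rightarrow> real) \<Rightarrow> (real \<Rightarrow> real) \<Rightarrow> ('a \<Rightarrow> real) \<Rightarrow> 'a \<Rightarrow> 'a \<Rightarrow> real" where
  "vartheta \<phi> \<Phi>2 ell x y = Theta \<phi> \<Phi>2 (ell x) (ell y)"

definition L2norm :: "('a \<Rightarrow> 'a \<Rightarrow> real) \<Rightarrow> ('a \<Rightarrow> real) \<Rightarrow> (real \<Rightarrow> real) \<Rightarrow> (real \<Rightarrow> real)
    \<Rightarrow> ('a \<Rightarrow> real) \<Rightarrow> ('a \<Rightarrow> 'a \<Rightarrow> real) \<Rightarrow> real" where
  "L2norm P q \<phi> \<Phi>2 ell F =
     sqrt (\<Sum>(x, y)\<in>Zset P. cw P q x y * vartheta \<phi> \<Phi>2 ell x y * (F x y)\<^sup>2)"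

definition H1norm :: "('a \<Rightarrow> 'a \<Rightarrow> real) \<Rightarrow> ('a \<Rightarrow> real) \<Rightarrow> (real \<Rightarrow> real) \<Rightarrow> (real \<Rightarrow> real)
    \<Rightarrow> ('a \<Rightarrow> real) \<Rightarrow> ('a \<Rightarrow> real) \<Rightarrow> real" where
  "H1norm P q \<phi> \<Phi>2 ell g = L2norm P q \<phi> \<Phi>2 ell (dgrad g)"

definition equot :: "real \<Rightarrow> real \<Rightarrow> ereal" where
  "equot a b = (if b = 0 then (if a > 0 then \<infinity> else if a < 0 then -\<infinity> else 0)
                else ereal (a / b))"

definition Hm1norm :: "('a::finite \<Rightarrow> 'a \<Rightarrow> real) \<Rightarrow> ('a \<Rightarrow> real) \<Rightarrow> (real \<Rightarrow> real) \<Rightarrow> (real \<Rightarrow> real)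
    \<Rightarrow> ('a \<Rightarrow> real) \<Rightarrow> ('a \<Rightarrow> real) \<Rightarrow> ereal" where
  "Hm1norm P q \<phi> \<Phi>2 ell f =
     (SUP g\<in>(UNIV :: ('a \<Rightarrow> real) set).
        equot (\<Sum>x\<in>UNIV. q x * f x * g x) (H1norm P q \<phi> \<Phi>2 ell g))"

definition flux_constraint :: "('a::finite \<Rightarrow> 'a \<Rightarrow> real) \<Rightarrow> (real \<Rightarrow> real) \<Rightarrow> (real \<Rightarrow> real)
    \<Rightarrow> ('a \<Rightarrow> real) \<Rightarrow> ('a \<Rightarrow> real) \<Rightarrow> ('a \<Rightarrow> 'a \<Rightarrow> real) \<Rightarrow> bool" where
  "flux_constraint P \<phi> \<Phi>2 ell f G \<longleftrightarrow>
     (\<forall>x. f x + ddiv P (\<lambda>u v. vartheta \<phi> \<Phi>2 ell u v * G u v) x = 0)"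

end

theory Submission
  imports Defs
begin

locale setting =
  fixes P :: "'a::finite \<Rightarrow> 'a \<Rightarrow> real"
    and q :: "'a \<Rightarrow> real"
    and \<phi> \<Phi>2 :: "real \<Rightarrow> real"
    and ell :: "'a \<Rightarrow> real"
  assumes stoch: "stochastic P"
    and irred: "irreducible_chain P"
    and inv: "invariant_distribution P q"
    and detbal: "\<And>y z. q y * kappa P y z = q z * kappa P z y"
    and dphi: "\<And>x. x > 0 \<Longrightarrow> (\<phi> has_real_derivative \<Phi>2 x) (at x)"
    and pos_Phi2: "\<And>x. x > 0 \<Longrightarrow> \<Phi>2 x > 0"
    and ell_pos: "\<And>x. ell x > 0"
begin

abbreviation "Z \<equiv> Zset P"
definition "th x y = vartheta \<phi> \<Phi>2 ell x y"
definition "zw x y = (if (x,y) \<in> Z then cw P q x y * th x y else 0)"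
definition "E F G = (\<Sum>x\<in>UNIV. \<Sum>y\<in>UNIV. zw x y * F x y * G x y)"

lemma P_nonneg: "P x y \<ge> 0" using stoch by (simp add: stochastic_def)

lemma Z_neq: "(x,y) \<in> Z \<Longrightarrow> x \<noteq> y"
proof
  assume "(x,y) \<in> Z" "x = y"
  have "P x x \<le> (\<Sum>y\<in>UNIV. P x y)" by (rule member_le_sum) (auto simp: P_nonneg)
  also have "... = 1" using stoch by (simp add: stochastic_def)
  finally show False using \<open>(x,y) \<in> Z\<close> \<open>x = y\<close> unfolding Zset_def kappa_def by simp
qed

lemma kappa_off: "x \<noteq> y \<Longrightarrow> (x,y) \<notin> Z \<Longrightarrow> kappa P x y = 0"
  using P_nonneg[of x y] unfolding Zset_def kappa_def by auto

lemma kappa_off_nonneg: "x \<noteq> y \<Longrightarrow> kappa P x y \<ge> 0"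
  using P_nonneg[of x y] unfolding kappa_def by auto

lemma Z_iff: "(x,y) \<in> Z \<longleftrightarrow> x \<noteq> y \<and> P x y > 0"
  using Z_neq[of x y] unfolding Zset_def kappa_def by auto

lemma trans_pow_step:
  assumes "trans_pow P (Suc n) x y > 0"
  shows "\<exists>w. trans_pow P n x w > 0 \<and> P w y > 0"
proof (rule ccontr)
  assume "\<not> ?thesis"
  hence "\<And>w. trans_pow P n x w * P w y \<le> 0"
    using P_nonneg by (metis less_eq_real_def mult_nonneg_nonpos mult_not_zero not_less zero_less_mult_pos2)
  hence "(\<Sum>w\<in>UNIV. trans_pow P n x w * P w y) \<le> 0" by (simp add: sum_nonpos)
  with assms show False by simp
qed

lemma connected:
  assumes step: "\<And>x y. (x,y) \<in> Z \<Longrightarrow> S x \<Longrightarrow> S y" and sx: "S x"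
  shows "S y"
proof -
  have pc: "trans_pow P n x y' > 0 \<Longrightarrow> S y'" for n y'
  proof (induction n arbitrary: y')
    case 0
    then show ?case using sx by (auto split: if_splits)
  next
    case (Suc n)
    then obtain w where w: "trans_pow P n x w > 0" "P w y' > 0" using trans_pow_step by blast
    with Suc have "S w" by blast
    show ?case
    proof (cases "w = y'")
      case True with \<open>S w\<close> show ?thesis by simp
    next
      case False
      hence "(w,y') \<in> Z" using w Z_iff by auto
      with step \<open>S w\<close> show ?thesis by blast
    qed
  qed
  obtain n where "trans_pow P n x y > 0" using irred unfolding irreducible_chain_def by blast
  thus ?thesis by (rule pc)
qed

lemma q_nonneg: "q x \<ge> 0" using inv by (simp add: invariant_distribution_def)

lemma q_pos: "q x > 0"
proof -
  have "(\<Sum>x\<in>UNIV. q x) = 1" using inv by (simp add: invariant_distribution_def)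
  then obtain x0 where "q x0 \<noteq> 0" by (metis sum.neutral zero_neq_one)
  hence x0: "q x0 > 0" using q_nonneg[of x0] by auto
  show ?thesis
  proof (rule connected[where S = "\<lambda>v. q v > 0", OF _ x0])
    fix u v assume uv: "(u,v) \<in> Z" "q u > 0"
    hence "q u * kappa P u v > 0" unfolding Zset_def by auto
    hence "q v * kappa P v u > 0" using detbal by metis
    thus "q v > 0" using q_nonneg[of v]
      by (metis less_eq_real_def mult_zero_left)
  qed
qed

lemma Z_sym: "(x,y) \<in> Z \<Longrightarrow> (y,x) \<in> Z"
proof -
  assume "(x,y) \<in> Z"
  hence "q x * kappa P x y > 0" using q_pos[of x] unfolding Zset_def by auto
  hence "q y * kappa P y x > 0" using detbal by metis
  thus ?thesis using q_pos[of y] unfolding Zset_def by (simp add: zero_less_mult_iff)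
qed

lemma phi_strict: "0 < a \<Longrightarrow> a < b \<Longrightarrow> \<phi> a < \<phi> b"
  apply (rule DERIV_pos_imp_increasing[of a b \<phi>])
  using dphi pos_Phi2 by (auto, meson less_le_trans)

lemma Theta_pos:
  assumes ab: "0 < a" "0 < b" shows "Theta \<phi> \<Phi>2 a b > 0"
proof (cases "a = b")
  case True
  then show ?thesis using ab pos_Phi2[of b] by (simp add: Theta_def)
next
  case False
  show ?thesis
  proof (cases "a < b")
    case True
    with phi_strict ab have "\<phi> a < \<phi> b" by blast
    then show ?thesis using False True by (simp add: Theta_def divide_neg_neg)
  next
    case c: False
    with False have "b < a" by simp
    with phi_strict ab have "\<phi> b < \<phi> a" by blast
    then show ?thesis using False \<open>b < a\<close> by (simp add: Theta_def divide_pos_pos)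
  qed
qed

lemma th_pos: "th x y > 0"
  unfolding th_def vartheta_def using Theta_pos ell_pos by blast

lemma Theta_sym: "Theta \<phi> \<Phi>2 a b = Theta \<phi> \<Phi>2 b a"
proof (cases "a = b")
  case True thus ?thesis by simp
next
  case False
  have "Theta \<phi> \<Phi>2 a b = (a-b)/(\<phi> a-\<phi> b)" using False by (simp add: Theta_def)
  also have "... = (-(a-b))/(-(\<phi> a-\<phi> b))" by (rule minus_divide_divide[symmetric])
  also have "... = (b-a)/(\<phi> b-\<phi> a)" by (simp only: minus_diff_eq)
  also have "... = Theta \<phi> \<Phi>2 b a" using False by (simp add: Theta_def)
  finally show ?thesis .
qed

lemma th_sym: "th x y = th y x"
  unfolding th_def vartheta_def by (rule Theta_sym)

lemma cw_sym: "cw P q x y = cw P q y x"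
  unfolding cw_def using detbal[of x y] by (simp add: mult.commute)

lemma zw_sym: "zw x y = zw y x"
  unfolding zw_def using Z_sym cw_sym th_sym by auto

lemma zw_pos: "(x,y) \<in> Z \<Longrightarrow> zw x y > 0"
  unfolding zw_def cw_def using th_pos[of x y] q_pos[of x] unfolding Zset_def by auto

lemma zw_nonneg: "zw x y \<ge> 0"
  using zw_pos[of x y] unfolding zw_def by auto


lemma L2norm_E: "L2norm P q \<phi> \<Phi>2 ell F = sqrt (E F F)"
proof -
  have Zeq: "Z = UNIV \<inter> Z" by simp
  have "(\<Sum>(x, y)\<in>Z. cw P q x y * vartheta \<phi> \<Phi>2 ell x y * (F x y)\<^sup>2)
      = (\<Sum>p\<in>UNIV. if p \<in> Z then (case p of (x,y) \<Rightarrow> cw P q x y * vartheta \<phi> \<Phi>2 ell x y * (F x y)\<^sup>2) else 0)"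
    by (subst Zeq, subst sum.inter_restrict) auto
  also have "... = (\<Sum>p\<in>UNIV. case p of (x,y) \<Rightarrow> zw x y * F x y * F x y)"
    by (rule sum.cong) (auto simp: zw_def th_def power2_eq_square)
  also have "... = E F F" unfolding E_def
    by (simp add: sum.cartesian_product UNIV_Times_UNIV)
  finally show ?thesis unfolding L2norm_def by simp
qed

lemma zwFF: "zw x y * F x y * F x y \<ge> 0"
proof -
  have "zw x y * F x y * F x y = zw x y * (F x y * F x y)" by (simp add: mult.assoc)
  also have "... \<ge> 0" by (rule mult_nonneg_nonneg[OF zw_nonneg zero_le_square])
  finally show ?thesis .
qed

lemma E_nonneg: "E F F \<ge> 0"
  unfolding E_def
  by (intro sum_nonneg) (rule zwFF)

lemma E_zero:
  assumes "E F F = 0" "(x,y) \<in> Z" shows "F x y = 0"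
proof -
  have t: "\<And>x y. zw x y * F x y * F x y \<ge> 0"
    by (rule zwFF)
  have "\<forall>x\<in>UNIV. (\<Sum>y\<in>UNIV. zw x y * F x y * F x y) = 0"
    using assms(1) unfolding E_def by (subst sum_nonneg_eq_0_iff[symmetric]) (auto intro: sum_nonneg t)
  hence "(\<Sum>y\<in>UNIV. zw x y * F x y * F x y) = 0" by blast
  hence "zw x y * F x y * F x y = 0" using t by (simp add: sum_nonneg_eq_0_iff)
  thus ?thesis using zw_pos[OF assms(2)] by simp
qed

lemma E_vanish:
  assumes "\<forall>(x,y)\<in>Z. F x y = 0" shows "E F G = 0"
  unfolding E_def
  by (intro sum.neutral ballI) (use assms in \<open>auto simp: zw_def\<close>)

lemma E_sym: "E F G = E G F"
  unfolding E_def by (simp add: mult_ac)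

lemma E_expand:
  "E (\<lambda>x y. F x y + t * G x y) (\<lambda>x y. F x y + t * G x y) = E F F + 2 * t * E F G + t^2 * E G G"
proof -
  have e: "\<And>x y. zw x y * (F x y + t*G x y) * (F x y + t*G x y) = zw x y*F x y*F x y + (2*t) * (zw x y*F x y*G x y) + t^2 * (zw x y*G x y*G x y)"
    by (simp add: algebra_simps power2_eq_square)
  show ?thesis unfolding E_def e by (simp add: sum.distrib sum_distrib_left)
qed

lemma E_CS: "E F G \<le> sqrt (E F F) * sqrt (E G G)"
proof (cases "E G G = 0")
  case True
  hence "\<forall>(x,y)\<in>Z. G x y = 0" using E_zero by blast
  hence "E G F = 0" by (rule E_vanish)
  hence "E F G = 0" by (simp add: E_sym)
  thus ?thesis by (simp add: E_nonneg)
next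
  case False
  hence a: "E G G > 0" using E_nonneg[of G] by simp
  define t where "t = - E F G / E G G"
  have "0 \<le> E F F + 2 * t * E F G + t^2 * E G G"
    using E_nonneg[of "\<lambda>x y. F x y + t * G x y"] unfolding E_expand .
  also have "... = E F F - (E F G)^2 / E G G"
    using a unfolding t_def by (simp add: field_simps power2_eq_square)
  finally have "(E F G)^2 \<le> E F F * E G G"
    using a by (simp add: field_simps)
  hence "E F G \<le> sqrt (E F F * E G G)" by (rule real_le_rsqrt)
  thus ?thesis by (simp add: real_sqrt_mult)
qed

lemma ddiv_Z: "ddiv P F x = (\<Sum>y\<in>UNIV. if (x,y) \<in> Z then 1/2 * kappa P x y * (F x y - F y x) else 0)"
proof -
  have "(\<Sum>y\<in>UNIV. if (x,y) \<in> Z then 1/2 * kappa P x y * (F x y - F y x) else 0)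
      = (\<Sum>y\<in>UNIV - {x}. if (x,y) \<in> Z then 1/2 * kappa P x y * (F x y - F y x) else 0)"
    by (subst sum.remove[of UNIV x]) (auto dest: Z_neq)
  also have "... = (\<Sum>y\<in>UNIV - {x}. 1/2 * kappa P x y * (F x y - F y x))"
    by (rule sum.cong) (auto simp: kappa_off)
  also have "... = ddiv P F x" by (simp add: ddiv_def sum_distrib_left mult.assoc)
  finally show ?thesis ..
qed

lemma weak:
  "(\<Sum>x\<in>UNIV. q x * g x * ddiv P (\<lambda>u v. th u v * G u v) x) = - E G (dgrad g)"
proof -
  have 1: "q x * g x * ddiv P (\<lambda>u v. th u v * G u v) x
        = (\<Sum>y\<in>UNIV. zw x y * G x y * g x - zw x y * G y x * g x)" for x
    unfolding ddiv_Z sum_distrib_left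
    by (rule sum.cong) (auto simp: zw_def cw_def th_sym algebra_simps)
  have B: "(\<Sum>x\<in>UNIV. \<Sum>y\<in>UNIV. zw x y * G y x * g x) = (\<Sum>x\<in>UNIV. \<Sum>y\<in>UNIV. zw x y * G x y * g y)"
  proof -
    have "(\<Sum>x\<in>UNIV. \<Sum>y\<in>UNIV. zw x y * G y x * g x) = (\<Sum>y\<in>UNIV. \<Sum>x\<in>UNIV. zw x y * G y x * g x)"
      by (rule sum.swap)
    also have "... = (\<Sum>x\<in>UNIV. \<Sum>y\<in>UNIV. zw x y * G x y * g y)"
      by (intro sum.cong refl) (subst zw_sym, rule refl)
    finally show ?thesis .
  qed
  have "(\<Sum>x\<in>UNIV. q x * g x * ddiv P (\<lambda>u v. th u v * G u v) x)
     = (\<Sum>x\<in>UNIV. \<Sum>y\<in>UNIV. zw x y * G x y * g x) - (\<Sum>x\<in>UNIV. \<Sum>y\<in>UNIV. zw x y * G y x * g x)"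
    unfolding 1 by (simp add: sum_subtractf)
  also have "... = (\<Sum>x\<in>UNIV. \<Sum>y\<in>UNIV. zw x y * G x y * g x) - (\<Sum>x\<in>UNIV. \<Sum>y\<in>UNIV. zw x y * G x y * g y)"
    using B by simp
  finally have L: "(\<Sum>x\<in>UNIV. q x * g x * ddiv P (\<lambda>u v. th u v * G u v) x) = (\<Sum>x\<in>UNIV. \<Sum>y\<in>UNIV. zw x y * G x y * g x) - (\<Sum>x\<in>UNIV. \<Sum>y\<in>UNIV. zw x y * G x y * g y)" .
  have R: "E G (dgrad g) = (\<Sum>x\<in>UNIV. \<Sum>y\<in>UNIV. zw x y * G x y * g y) - (\<Sum>x\<in>UNIV. \<Sum>y\<in>UNIV. zw x y * G x y * g x)"
    unfolding E_def dgrad_def by (simp add: right_diff_distrib sum_subtractf)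
  show ?thesis unfolding L R by simp
qed


lemmas weak' = weak[unfolded th_def]

lemma E_zero_right: "E F (\<lambda>x y. 0) = 0"
  unfolding E_def by simp

lemma dgrad_const: "dgrad (\<lambda>x. c) = (\<lambda>x y. 0)"
  unfolding dgrad_def by simp

lemma E_diff_left: "E (\<lambda>x y. F x y - G x y) H = E F H - E G H"
  unfolding E_def by (simp add: algebra_simps sum_subtractf)

lemma E_diff_right: "E H (\<lambda>x y. F x y - G x y) = E H F - E H G"
  unfolding E_def by (simp add: algebra_simps sum_subtractf)

lemma dgrad_diff: "dgrad (\<lambda>x. a x - b x) = (\<lambda>x y. dgrad a x y - dgrad b x y)"
  unfolding dgrad_def by (simp add: algebra_simps)

lemma constraint_weak:
  "flux_constraint P \<phi> \<Phi>2 ell f G \<longleftrightarrow> (\<forall>g. (\<Sum>x\<in>UNIV. q x * f x * g x) = E G (dgrad g))"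
proof
  assume c: "flux_constraint P \<phi> \<Phi>2 ell f G"
  show "\<forall>g. (\<Sum>x\<in>UNIV. q x * f x * g x) = E G (dgrad g)"
  proof
    fix g
    let ?D = "\<lambda>x. ddiv P (\<lambda>u v. vartheta \<phi> \<Phi>2 ell u v * G u v) x"
    have fx: "f x = - ?D x" for x
      using c[unfolded flux_constraint_def, rule_format, of x] by linarith
    have "(\<Sum>x\<in>UNIV. q x * f x * g x) = (\<Sum>x\<in>UNIV. - (q x * g x * ?D x))"
      by (rule sum.cong[OF refl]) (simp add: fx)
    also have "... = - (\<Sum>x\<in>UNIV. q x * g x * ?D x)" by (rule sum_negf)
    finally have "(\<Sum>x\<in>UNIV. q x * f x * g x) = - (\<Sum>x\<in>UNIV. q x * g x * ?D x)" .
    thus "(\<Sum>x\<in>UNIV. q x * f x * g x) = E G (dgrad g)" using weak'[of g G] by simp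
  qed
next
  assume w: "\<forall>g. (\<Sum>x\<in>UNIV. q x * f x * g x) = E G (dgrad g)"
  show "flux_constraint P \<phi> \<Phi>2 ell f G"
    unfolding flux_constraint_def
  proof
    fix x0
    define g :: "'a \<Rightarrow> real" where "g = (\<lambda>x. if x = x0 then 1 else 0)"
    have "(\<Sum>x\<in>UNIV. q x * f x * g x) = (\<Sum>x\<in>UNIV. if x = x0 then q x0 * f x0 else 0)"
      by (rule sum.cong) (auto simp: g_def)
    also have "... = q x0 * f x0" by simp
    finally have A: "(\<Sum>x\<in>UNIV. q x * f x * g x) = q x0 * f x0" .
    have "(\<Sum>x\<in>UNIV. q x * g x * ddiv P (\<lambda>u v. vartheta \<phi> \<Phi>2 ell u v * G u v) x)
          = (\<Sum>x\<in>UNIV. if x = x0 then q x0 * ddiv P (\<lambda>u v. vartheta \<phi> \<Phi>2 ell u v * G u v) x0 else 0)"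
      by (rule sum.cong) (auto simp: g_def)
    also have "... = q x0 * ddiv P (\<lambda>u v. vartheta \<phi> \<Phi>2 ell u v * G u v) x0" by simp
    finally have B: "(\<Sum>x\<in>UNIV. q x * g x * ddiv P (\<lambda>u v. vartheta \<phi> \<Phi>2 ell u v * G u v) x)
          = q x0 * ddiv P (\<lambda>u v. vartheta \<phi> \<Phi>2 ell u v * G u v) x0" .
    from A B have "q x0 * f x0 = - q x0 * ddiv P (\<lambda>u v. vartheta \<phi> \<Phi>2 ell u v * G u v) x0"
      using w weak'[of g G] by simp
    hence "q x0 * (f x0 + ddiv P (\<lambda>u v. vartheta \<phi> \<Phi>2 ell u v * G u v) x0) = 0"
      by (simp add: algebra_simps)
    thus "f x0 + ddiv P (\<lambda>u v. vartheta \<phi> \<Phi>2 ell u v * G u v) x0 = 0"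
      using q_pos[of x0] by simp
  qed
qed

lemma grad_zero_const:
  assumes "\<forall>(x,y)\<in>Z. dgrad h x y = 0"
  shows "h y = h x"
proof (rule connected[where S = "\<lambda>v. h v = h x"])
  fix u v assume "(u,v) \<in> Z" "h u = h x"
  thus "h v = h x" using assms unfolding dgrad_def by auto
qed simp

definition "Lop h = (\<lambda>x. - ddiv P (\<lambda>u v. th u v * dgrad h u v) x + (\<Sum>y\<in>UNIV. q y * h y))"

lemma ddiv_add: "ddiv P (\<lambda>u v. F u v + G u v) x = ddiv P F x + ddiv P G x"
proof -
  have "(\<Sum>y\<in>UNIV-{x}. kappa P x y * ((F x y + G x y) - (F y x + G y x)))
      = (\<Sum>y\<in>UNIV-{x}. kappa P x y * (F x y - F y x) + kappa P x y * (G x y - G y x))"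
    by (rule sum.cong) (simp_all add: algebra_simps)
  thus ?thesis unfolding ddiv_def by (simp add: sum.distrib distrib_left)
qed

lemma ddiv_scale: "ddiv P (\<lambda>u v. c * F u v) x = c * ddiv P F x"
  unfolding ddiv_def by (simp add: algebra_simps sum_distrib_left)

lemma Lop_add: "Lop (\<lambda>x. a x + b x) = (\<lambda>x. Lop a x + Lop b x)"
proof -
  have e: "(\<lambda>u v. th u v * dgrad (\<lambda>x. a x + b x) u v) = (\<lambda>u v. th u v * dgrad a u v + th u v * dgrad b u v)"
    by (simp add: dgrad_def algebra_simps)
  show ?thesis unfolding Lop_def e ddiv_add by (rule ext) (simp add: algebra_simps sum.distrib)
qed

lemma Lop_scale: "Lop (\<lambda>x. c * a x) = (\<lambda>x. c * Lop a x)"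
proof -
  have e: "(\<lambda>u v. th u v * dgrad (\<lambda>x. c * a x) u v) = (\<lambda>u v. c * (th u v * dgrad a u v))"
    by (simp add: dgrad_def algebra_simps)
  show ?thesis unfolding Lop_def e ddiv_scale by (rule ext) (simp add: algebra_simps sum_distrib_left)
qed

lemma Lop_zero:
  assumes "Lop h = (\<lambda>x. 0)" shows "h = (\<lambda>x. 0)"
proof -
  let ?s = "\<Sum>y\<in>UNIV. q y * h y"
  let ?D = "\<lambda>x. ddiv P (\<lambda>u v. th u v * dgrad h u v) x"
  have pw: "q x * h x * Lop h x = - (q x * h x * ?D x) + q x * h x * ?s" for x
    by (simp add: Lop_def algebra_simps)
  have "0 = (\<Sum>x\<in>UNIV. q x * h x * Lop h x)" using assms by simp
  also have "... = (\<Sum>x\<in>UNIV. - (q x * h x * ?D x) + q x * h x * ?s)"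
    by (rule sum.cong[OF refl]) (rule pw)
  also have "... = - (\<Sum>x\<in>UNIV. q x * h x * ?D x) + (\<Sum>x\<in>UNIV. q x * h x * ?s)"
    by (simp only: sum.distrib sum_negf)
  also have "(\<Sum>x\<in>UNIV. q x * h x * ?D x) = - E (dgrad h) (dgrad h)" by (rule weak)
  also have "(\<Sum>x\<in>UNIV. q x * h x * ?s) = ?s * ?s" by (simp add: sum_distrib_right)
  finally have "E (dgrad h) (dgrad h) + ?s * ?s = 0" by simp
  moreover have "E (dgrad h) (dgrad h) \<ge> 0" by (rule E_nonneg)
  moreover have "?s * ?s \<ge> 0" by simp
  ultimately have e: "E (dgrad h) (dgrad h) = 0" and s0: "?s * ?s = 0" by linarith+
  from s0 have s: "?s = 0" by simp
  obtain x0 :: 'a where True by blast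
  have c: "h y = h x0" for y using grad_zero_const E_zero[OF e] by blast
  have "?s = (\<Sum>y\<in>UNIV. q y * h x0)" by (rule sum.cong[OF refl]) (metis c)
  also have "... = h x0 * (\<Sum>y\<in>UNIV. q y)" by (simp add: sum_distrib_left mult.commute)
  also have "(\<Sum>y\<in>UNIV. q y) = 1" using inv by (simp add: invariant_distribution_def)
  finally have h0: "h x0 = 0" using s by simp
  have "h y = 0" for y using c[of y] h0 by simp
  thus ?thesis by (simp add: fun_eq_iff)
qed

lemma existence:
  assumes S: "(\<Sum>x\<in>UNIV. q x * f x) = 0"
  shows "\<exists>h. flux_constraint P \<phi> \<Phi>2 ell f (dgrad h)"
proof -
  define T :: "real^'a \<Rightarrow> real^'a" where "T v = (\<chi> x. Lop (vec_nth v) x)" for v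
  have vadd: "vec_nth (a + b) = (\<lambda>x. vec_nth a x + vec_nth b x)" for a b :: "real^'a" by auto
  have vsc: "vec_nth (c *\<^sub>R a) = (\<lambda>x. c * vec_nth a x)" for c and a :: "real^'a" by auto
  have lin: "linear T"
    by (rule linearI) (simp_all add: T_def vadd vsc Lop_add Lop_scale vec_eq_iff)
  have "inj T"
    unfolding linear_injective_0[OF lin]
  proof (intro allI impI)
    fix v assume "T v = 0"
    hence "Lop (vec_nth v) = (\<lambda>x. 0)" unfolding T_def by (auto simp: vec_eq_iff)
    hence "vec_nth v = (\<lambda>x. 0)" by (rule Lop_zero)
    thus "v = 0" by (simp add: vec_eq_iff)
  qed
  hence "surj T" using lin linear_inj_imp_surj by blast
  then obtain v where "T v = (\<chi> x. f x)" by (metis surjD)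
  hence L: "Lop h = f" if "h = vec_nth v" for h using that unfolding T_def by (auto simp: vec_eq_iff)
  define h where "h = vec_nth v"
  have Lh: "Lop h x = f x" for x using L h_def by simp
  let ?s = "\<Sum>y\<in>UNIV. q y * h y"
  let ?D = "\<lambda>x. ddiv P (\<lambda>u v. th u v * dgrad h u v) x"
  have pw: "q x * Lop h x = - (q x * (\<lambda>_. 1) x * ?D x) + q x * ?s" for x
    by (simp add: Lop_def algebra_simps)
  have "0 = (\<Sum>x\<in>UNIV. q x * Lop h x)" using S Lh by simp
  also have "... = (\<Sum>x\<in>UNIV. - (q x * (\<lambda>_. 1) x * ?D x) + q x * ?s)"
    by (rule sum.cong[OF refl]) (rule pw)
  also have "... = - (\<Sum>x\<in>UNIV. q x * (\<lambda>_. 1) x * ?D x) + (\<Sum>x\<in>UNIV. q x * ?s)"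
    by (simp only: sum.distrib sum_negf)
  also have "(\<Sum>x\<in>UNIV. q x * (\<lambda>_. 1) x * ?D x) = - E (dgrad h) (dgrad (\<lambda>_. 1))" by (rule weak)
  also have "(\<Sum>x\<in>UNIV. q x * ?s) = ?s"
    using inv by (simp add: sum_distrib_right[symmetric] invariant_distribution_def)
  finally have s: "?s = 0" unfolding dgrad_const E_zero_right by simp
  have "flux_constraint P \<phi> \<Phi>2 ell f (dgrad h)"
    unfolding flux_constraint_def
  proof
    fix x
    show "f x + ddiv P (\<lambda>u v. vartheta \<phi> \<Phi>2 ell u v * dgrad h u v) x = 0"
      using Lh[of x] s unfolding Lop_def th_def by simp
  qed
  thus ?thesis by blast
qed

lemma E_diff_expand: "E (\<lambda>x y. F x y - G x y) (\<lambda>x y. F x y - G x y) = E F F - 2 * E F G + E G G"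
  using E_sym[of G F] unfolding E_diff_left E_diff_right by simp


lemma equot_le:
  assumes b: "b \<ge> 0" and N0: "N \<ge> 0" and ab: "a \<le> N * b"
  shows "equot a b \<le> ereal N"
proof (cases "b = 0")
  case True
  hence "a \<le> 0" using ab by simp
  thus ?thesis using N0 True by (cases "a < 0") (simp_all add: equot_def)
next
  case False
  hence "b > 0" using b by simp
  hence "a / b \<le> N" using ab by (simp add: pos_divide_le_eq mult.commute)
  thus ?thesis using False by (simp add: equot_def)
qed

lemma equot_sq: assumes "N \<ge> 0" shows "equot (N * N) N = ereal N"
proof (cases "N = 0")
  case True thus ?thesis by (simp add: equot_def)
next
  case False thus ?thesis by (simp add: equot_def)
qed

end

theorem proposition8p3:
  fixes P :: "'a::finite \<Rightarrow> 'a \<Rightarrow> real"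
    and q :: "'a \<Rightarrow> real"
    and \<Phi> \<phi> \<Phi>2 :: "real \<Rightarrow> real"
    and ell f :: "'a \<Rightarrow> real"
  assumes stoch: "stochastic P"
    and irred: "irreducible_chain P"
    and inv: "invariant_distribution P q"
    and detbal: "\<And>y z. q y * kappa P y z = q z * kappa P z y"
    and convex: "convex_on {0<..} \<Phi>"
    and dPhi: "\<And>x. x > 0 \<Longrightarrow> (\<Phi> has_real_derivative \<phi> x) (at x)"
    and cont_phi: "continuous_on {0<..} \<phi>"
    and dphi: "\<And>x. x > 0 \<Longrightarrow> (\<phi> has_real_derivative \<Phi>2 x) (at x)"
    and cont_Phi2: "continuous_on {0<..} \<Phi>2"
    and pos_Phi2: "\<And>x. x > 0 \<Longrightarrow> \<Phi>2 x > 0"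
    and Phi1: "\<Phi> 1 = 0"
    and ell_pos: "\<And>x. ell x > 0"
    and ell_norm: "(\<Sum>x\<in>UNIV. q x * ell x) = 1"
  shows "(Hm1norm P q \<phi> \<Phi>2 ell f =
           (INF G\<in>{G. flux_constraint P \<phi> \<Phi>2 ell f G}. ereal (L2norm P q \<phi> \<Phi>2 ell G)))
    \<and> (Hm1norm P q \<phi> \<Phi>2 ell f < \<infinity> \<longleftrightarrow> (\<Sum>x\<in>UNIV. q x * f x) = 0)
    \<and> ((\<Sum>x\<in>UNIV. q x * f x) = 0 \<longrightarrow>
           (\<exists>h. flux_constraint P \<phi> \<Phi>2 ell f (dgrad h)
              \<and> (\<forall>h'. flux_constraint P \<phi> \<Phi>2 ell f (dgrad h') \<longrightarrow>
                       (\<forall>(x, y)\<in>Zset P. dgrad h' x y = dgrad h x y))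
              \<and> ereal (L2norm P q \<phi> \<Phi>2 ell (dgrad h)) =
                  (INF G\<in>{G. flux_constraint P \<phi> \<Phi>2 ell f G}. ereal (L2norm P q \<phi> \<Phi>2 ell G))
              \<and> (\<forall>G. flux_constraint P \<phi> \<Phi>2 ell f G \<and>
                     ereal (L2norm P q \<phi> \<Phi>2 ell G) =
                       (INF G'\<in>{G. flux_constraint P \<phi> \<Phi>2 ell f G}. ereal (L2norm P q \<phi> \<Phi>2 ell G'))
                     \<longrightarrow> (\<forall>(x, y)\<in>Zset P. G x y = dgrad h x y))))"
proof -
  interpret setting P q \<phi> \<Phi>2 ell
    by unfold_locales (fact stoch irred inv detbal dphi pos_Phi2 ell_pos)+
  define C where "C = {G. flux_constraint P \<phi> \<Phi>2 ell f G}"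
  define I where "I = (INF G\<in>C. ereal (L2norm P q \<phi> \<Phi>2 ell G))"
  define S where "S = (\<Sum>x\<in>UNIV. q x * f x)"
  have CE: "G \<in> C \<Longrightarrow> (\<Sum>x\<in>UNIV. q x * f x * g x) = E G (dgrad g)" for G g
    unfolding C_def using constraint_weak by blast
  have H1: "H1norm P q \<phi> \<Phi>2 ell g = sqrt (E (dgrad g) (dgrad g))" for g
    unfolding H1norm_def L2norm_E ..
  show ?thesis
  proof (cases "S = 0")
    case False
    have Cempty: "C = {}"
    proof (rule ccontr)
      assume "C \<noteq> {}"
      then obtain G where "G \<in> C" by blast
      from CE[OF this, of "\<lambda>_. 1"] have "S = 0"
        unfolding S_def dgrad_const E_zero_right by simp
      with False show False by simp
    qed
    have "equot (\<Sum>x\<in>UNIV. q x * f x * S) (H1norm P q \<phi> \<Phi>2 ell (\<lambda>_. S)) = \<infinity>"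
    proof -
      have "(\<Sum>x\<in>UNIV. q x * f x * S) = S * S" unfolding S_def by (simp add: sum_distrib_right)
      moreover have "S * S > 0" using False by (metis linorder_neqE mult_neg_neg mult_pos_pos)
      moreover have "H1norm P q \<phi> \<Phi>2 ell (\<lambda>_. S) = 0" unfolding H1 dgrad_const E_zero_right by simp
      ultimately show ?thesis unfolding equot_def by simp
    qed
    moreover have "equot (\<Sum>x\<in>UNIV. q x * f x * S) (H1norm P q \<phi> \<Phi>2 ell (\<lambda>_. S)) \<le> Hm1norm P q \<phi> \<Phi>2 ell f"
      unfolding Hm1norm_def
      by (rule SUP_upper[where i = "\<lambda>_. S" and A = UNIV and f = "\<lambda>g. equot (\<Sum>x\<in>UNIV. q x * f x * g x) (H1norm P q \<phi> \<Phi>2 ell g)", simplified])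
    ultimately have Hinf: "Hm1norm P q \<phi> \<Phi>2 ell f = \<infinity>" by simp
    have "I = \<infinity>" by (simp only: I_def Cempty INF_empty top_ereal_def)
    show ?thesis
      unfolding C_def[symmetric] I_def[symmetric] S_def[symmetric]
      using Hinf False \<open>I = \<infinity>\<close> by simp
  next
    case True
    obtain h where hC': "flux_constraint P \<phi> \<Phi>2 ell f (dgrad h)"
      using existence True unfolding S_def by blast
    hence hC: "dgrad h \<in> C" unfolding C_def by simp
    define N where "N = sqrt (E (dgrad h) (dgrad h))"
    have N0: "N \<ge> 0" unfolding N_def by (simp add: E_nonneg)
    have NN: "N * N = E (dgrad h) (dgrad h)" unfolding N_def using E_nonneg by simp
    have hE: "(\<Sum>x\<in>UNIV. q x * f x * g x) = E (dgrad h) (dgrad g)" for g using CE[OF hC] .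
    have lower: "N \<le> L2norm P q \<phi> \<Phi>2 ell G" if "G \<in> C" for G
    proof -
      have "N * N = E G (dgrad h)" using CE[OF that, of h] hE[of h] NN by simp
      also have "... \<le> L2norm P q \<phi> \<Phi>2 ell G * N" unfolding L2norm_E N_def by (rule E_CS)
      finally have "N * N \<le> L2norm P q \<phi> \<Phi>2 ell G * N" .
      moreover have "L2norm P q \<phi> \<Phi>2 ell G \<ge> 0" unfolding L2norm_E by (simp add: E_nonneg)
      ultimately show ?thesis using N0
        by (cases "N = 0") (auto intro: mult_right_le_imp_le)
    qed
    have IN: "I = ereal N"
    proof (rule antisym)
      show "I \<le> ereal N" unfolding I_def
        using INF_lower[OF hC, of "\<lambda>G. ereal (L2norm P q \<phi> \<Phi>2 ell G)"]
        by (simp add: L2norm_E N_def)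
      show "ereal N \<le> I" unfolding I_def
        by (rule INF_greatest) (simp add: lower)
    qed
    have HN: "Hm1norm P q \<phi> \<Phi>2 ell f = ereal N"
    proof (rule antisym)
      show "Hm1norm P q \<phi> \<Phi>2 ell f \<le> ereal N"
        unfolding Hm1norm_def
      proof (rule SUP_least)
        fix g :: "'a \<Rightarrow> real"
        show "equot (\<Sum>x\<in>UNIV. q x * f x * g x) (H1norm P q \<phi> \<Phi>2 ell g) \<le> ereal N"
        proof (rule equot_le)
          show "0 \<le> H1norm P q \<phi> \<Phi>2 ell g" unfolding H1 by (simp add: E_nonneg)
          show "0 \<le> N" by (rule N0)
          show "(\<Sum>x\<in>UNIV. q x * f x * g x) \<le> N * H1norm P q \<phi> \<Phi>2 ell g"
            unfolding hE H1 N_def by (rule E_CS)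
        qed
      qed
      have "equot (\<Sum>x\<in>UNIV. q x * f x * h x) (H1norm P q \<phi> \<Phi>2 ell h) = ereal N"
        unfolding hE H1 N_def[symmetric] using equot_sq[OF N0] NN by simp
      moreover have "equot (\<Sum>x\<in>UNIV. q x * f x * h x) (H1norm P q \<phi> \<Phi>2 ell h) \<le> Hm1norm P q \<phi> \<Phi>2 ell f"
        unfolding Hm1norm_def
        by (rule SUP_upper[where i = h and A = UNIV and f = "\<lambda>g. equot (\<Sum>x\<in>UNIV. q x * f x * g x) (H1norm P q \<phi> \<Phi>2 ell g)", simplified])
      ultimately show "ereal N \<le> Hm1norm P q \<phi> \<Phi>2 ell f" by simp
    qed
    have uniq_grad: "\<forall>h'. flux_constraint P \<phi> \<Phi>2 ell f (dgrad h') \<longrightarrow>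
                       (\<forall>(x, y)\<in>Zset P. dgrad h' x y = dgrad h x y)"
    proof (intro allI impI)
      fix h' assume "flux_constraint P \<phi> \<Phi>2 ell f (dgrad h')"
      hence h'C: "dgrad h' \<in> C" unfolding C_def by simp
      define D where "D = (\<lambda>x y. dgrad h' x y - dgrad h x y)"
      have D: "D = dgrad (\<lambda>x. h' x - h x)" unfolding D_def dgrad_diff ..
      define k where "k = (\<lambda>x. h' x - h x)"
      have "E D (dgrad k) = E (dgrad h') (dgrad k) - E (dgrad h) (dgrad k)"
        unfolding D_def by (rule E_diff_left)
      also have "... = 0" using CE[OF h'C, of k] CE[OF hC, of k] by simp
      finally have "E D D = 0" using D unfolding k_def by simp
      thus "\<forall>(x, y)\<in>Zset P. dgrad h' x y = dgrad h x y"
        using E_zero unfolding D_def by fastforce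
    qed
    have uniq_min: "\<forall>G. flux_constraint P \<phi> \<Phi>2 ell f G \<and>
                     ereal (L2norm P q \<phi> \<Phi>2 ell G) = I
                     \<longrightarrow> (\<forall>(x, y)\<in>Zset P. G x y = dgrad h x y)"
    proof (intro allI impI, elim conjE)
      fix G assume GC': "flux_constraint P \<phi> \<Phi>2 ell f G" and GI: "ereal (L2norm P q \<phi> \<Phi>2 ell G) = I"
      hence GC: "G \<in> C" unfolding C_def by simp
      have "sqrt (E G G) = N" using GI IN unfolding L2norm_E by simp
      moreover have "E G G = sqrt (E G G) * sqrt (E G G)" using E_nonneg[of G] by simp
      ultimately have GG: "E G G = N * N" by simp
      have Gh: "E G (dgrad h) = N * N" using CE[OF GC, of h] hE[of h] NN by simp
      have "E (\<lambda>x y. G x y - dgrad h x y) (\<lambda>x y. G x y - dgrad h x y) = 0"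
        unfolding E_diff_expand GG Gh NN[symmetric] by simp
      thus "\<forall>(x, y)\<in>Zset P. G x y = dgrad h x y"
        using E_zero by fastforce
    qed
    have c1: "Hm1norm P q \<phi> \<Phi>2 ell f = I" using HN IN by simp
    have c2: "Hm1norm P q \<phi> \<Phi>2 ell f < \<infinity>" using HN by simp
    have c3: "ereal (L2norm P q \<phi> \<Phi>2 ell (dgrad h)) = I" using IN by (simp add: L2norm_E N_def)
    show ?thesis
      unfolding C_def[symmetric] I_def[symmetric] S_def[symmetric]
      using c1 c2 c3 uniq_grad uniq_min hC' True by blast
  qed
qed

end
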